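(* Let $(X,\rho)$ be a complete, separable metric space, let $\omega:[0,+\infty)\to[0,+\infty)$ be a continuous, concave, nonzero and nondecreasing function with $\omega(0)=0$, and let $\Theta=\{\theta_n\}_{n=1}^\infty$ be dense in $X$. Define $d_\Theta:\mathcal{C}_\omega(X)\times\mathcal{C}_\omega(X)\to\mathbb{R}$ by $d_\Theta(f,g)=\sum_{n=1}^\infty 2^{-n}\min\{1,\rho(f(\theta_n),g(\theta_n))\}$. Then $d_\Theta$ is a complete metric on $\mathcal{C}_\omega(X)$. Moreover, a sequence $(f_k)_{k=1}^\infty$ in $\mathcal{C}_\omega(X)$ converges to $f\in\mathcal{C}_\omega(X)$ with respect to $d_\Theta$ if and only if $f_k(x)\to f(x)$ for every $x\in X$ as $k\to\infty$.
   Context: For $f:X\to X$, the modulus of continuity is $\omega_f(s)=\sup\{\rho(f(x),f(y)): x,y\in X,\ \rho(x,y)\le s\}$ for $s\ge0$; $\mathcal{C}_\omega(X)$ is the set of all maps $f:X\to X$ with $\omega_f(s)\le\omega(s)$ for all $s\ge0$. *)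

theory Defs
  imports "HOL-Analysis.Analysis"
begin

text \<open>Modulus of continuity, as an extended real (the supremum may be infinite).\<close>
definition mod_cont :: "('a::metric_space \<Rightarrow> 'a) \<Rightarrow> real \<Rightarrow> ereal" where
  "mod_cont f s = (SUP p \<in> {(x, y). dist x y \<le> s}. ereal (dist (f (fst p)) (f (snd p))))"

definition C_omega :: "(real \<Rightarrow> real) \<Rightarrow> ('a::metric_space \<Rightarrow> 'a) set" where
  "C_omega \<omega> = {f. \<forall>s\<ge>0. mod_cont f s \<le> ereal (\<omega> s)}"

text \<open>The metric d_Theta; the dense sequence is indexed by n \<ge> 1.\<close>
definition d_Theta :: "(nat \<Rightarrow> 'a::metric_space) \<Rightarrow> ('a \<Rightarrow> 'a) \<Rightarrow> ('a \<Rightarrow> 'a) \<Rightarrow> real" where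
  "d_Theta \<theta> f g = (\<Sum>n. (1/2) ^ (Suc n) * min 1 (dist (f (\<theta> (Suc n))) (g (\<theta> (Suc n)))))"

end

theory Submission
  imports Defs
begin

lemma Comega_dist:
  assumes "f \<in> C_omega \<omega>"
  shows "dist (f x) (f y) \<le> \<omega> (dist x y)"
proof -
  have "ereal (dist (f x) (f y)) \<le> mod_cont f (dist x y)"
    unfolding mod_cont_def by (rule SUP_upper2[of "(x,y)"]) auto
  also have "\<dots> \<le> ereal (\<omega> (dist x y))" using assms unfolding C_omega_def by auto
  finally show ?thesis by simp
qed

lemma Comega_intro:
  fixes f :: "'a::metric_space \<Rightarrow> 'a"
  assumes "\<And>x y::'a. dist (f x) (f y) \<le> \<omega> (dist x y)" and "mono_on {0..} \<omega>"
  shows "f \<in> C_omega \<omega>"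
  unfolding C_omega_def mod_cont_def
proof (safe)
  fix s :: real assume s: "0 \<le> s"
  show "(SUP p\<in>{(x, y). dist x y \<le> s}. ereal (dist (f (fst p)) (f (snd p)))) \<le> ereal (\<omega> s)"
  proof (rule SUP_least)
    fix p :: "'a \<times> 'a" assume "p \<in> {(x, y). dist x y \<le> s}"
    then obtain x y :: 'a where p: "p = (x,y)" "dist x y \<le> s" by auto
    have "dist (f x) (f y) \<le> \<omega> (dist x y)" by (rule assms(1))
    also have "\<dots> \<le> \<omega> s" by (rule mono_onD[OF assms(2)]) (use p(2) s in auto)
    finally show "ereal (dist (f (fst p)) (f (snd p))) \<le> ereal (\<omega> s)" using p by simp
  qed
qed

lemma summ_geo: "summable (\<lambda>n. (1/2::real)^Suc n)" 
  by (simp add: summable_mult)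
lemma suminf_geo: "(\<Sum>n. (1/2::real)^Suc n) = 1"
proof -
  have "(\<Sum>n. (1/2::real)^Suc n) = (\<Sum>n. (1/2) * (1/2::real)^n)" by simp
  also have "\<dots> = (1/2) * (\<Sum>n. (1/2::real)^n)" by (rule suminf_mult) simp
  also have "\<dots> = 1" by (simp add: suminf_geometric)
  finally show ?thesis .
qed

lemma dT_summ: "summable (\<lambda>n. (1/2::real) ^ Suc n * min 1 (dist (f (\<theta> (Suc n))) (g (\<theta> (Suc n)))))"
  by (rule summable_comparison_test[OF _ summ_geo]) auto

lemma dT_nonneg: "0 \<le> d_Theta \<theta> f g"
  unfolding d_Theta_def by (rule suminf_nonneg[OF dT_summ]) auto

lemma dT_commute: "d_Theta \<theta> f g = d_Theta \<theta> g f"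
  unfolding d_Theta_def by (simp add: dist_commute)

lemma dT_triangle: "d_Theta \<theta> f h \<le> d_Theta \<theta> f g + d_Theta \<theta> g h"
  unfolding d_Theta_def
  apply (subst suminf_add[OF dT_summ dT_summ])
  apply (rule suminf_le)
  subgoal for n
  proof -
    have "min 1 (dist (f (\<theta> (Suc n))) (h (\<theta> (Suc n)))) \<le> min 1 (dist (f (\<theta> (Suc n))) (g (\<theta> (Suc n)))) + min 1 (dist (g (\<theta> (Suc n))) (h (\<theta> (Suc n))))"
      using dist_triangle[of "f (\<theta> (Suc n))" "h (\<theta> (Suc n))" "g (\<theta> (Suc n))"]
        zero_le_dist[of "f (\<theta> (Suc n))" "g (\<theta> (Suc n))"] zero_le_dist[of "g (\<theta> (Suc n))" "h (\<theta> (Suc n))"]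
      unfolding min_def by (smt (verit))
    then show ?thesis by (simp add: distrib_left[symmetric])
  qed
  apply (rule dT_summ)
  apply (rule summable_add[OF dT_summ dT_summ])
  done

lemma dT_term: "(1/2::real) ^ Suc n * min 1 (dist (f (\<theta> (Suc n))) (g (\<theta> (Suc n)))) \<le> d_Theta \<theta> f g"
  unfolding d_Theta_def
  using sum_le_suminf[OF dT_summ, of "{n}" f \<theta> g] by auto

lemma dT_tail: "d_Theta \<theta> f g \<le> (\<Sum>n<N. dist (f (\<theta> (Suc n))) (g (\<theta> (Suc n)))) + (1/2)^N"
proof -
  let ?a = "\<lambda>n. (1/2::real) ^ Suc n * min 1 (dist (f (\<theta> (Suc n))) (g (\<theta> (Suc n))))"
  have "d_Theta \<theta> f g = (\<Sum>n. ?a (n + N)) + (\<Sum>n<N. ?a n)"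
    unfolding d_Theta_def by (rule suminf_split_initial_segment[OF dT_summ])
  moreover have "(\<Sum>n. ?a (n + N)) \<le> (\<Sum>n. (1/2)^N * (1/2::real)^Suc n)"
  proof (rule suminf_le)
    fix n
    have "?a (n+N) \<le> (1/2::real) ^ Suc (n+N) * 1"
      by (rule mult_left_mono) auto
    also have "\<dots> = (1/2)^N * (1/2::real)^Suc n"
    proof -
      have "Suc (n+N) = N + Suc n" by simp
      then show ?thesis by (simp only: power_add mult_1_right)
    qed
    finally show "?a (n+N) \<le> (1/2)^N * (1/2::real)^Suc n" .
    show "summable (\<lambda>n. ?a (n + N))" using iffD2[OF summable_iff_shift[where f="?a" and k=N] dT_summ[of f \<theta> g]] by simp
    show "summable (\<lambda>n. (1/2)^N * (1/2::real)^Suc n)" using summ_geo by (rule summable_mult)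
  qed
  moreover have "(\<Sum>n. (1/2)^N * (1/2::real)^Suc n) = (1/2)^N"
    by (simp only: suminf_mult[OF summ_geo] suminf_geo mult_1_right)
  moreover have "(\<Sum>n<N. ?a n) \<le> (\<Sum>n<N. dist (f (\<theta> (Suc n))) (g (\<theta> (Suc n))))"
  proof (rule sum_mono)
    fix n
    have "?a n \<le> 1 * min 1 (dist (f (\<theta> (Suc n))) (g (\<theta> (Suc n))))"
    proof (rule mult_right_mono)
      show "(1/2::real)^Suc n \<le> 1" by (rule power_le_one) auto
    qed simp
    moreover have "min 1 (dist (f (\<theta> (Suc n))) (g (\<theta> (Suc n)))) \<le> dist (f (\<theta> (Suc n))) (g (\<theta> (Suc n)))" by (rule min.cobounded2)
    ultimately show "?a n \<le> dist (f (\<theta> (Suc n))) (g (\<theta> (Suc n)))" by linarith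
  qed
  ultimately show ?thesis by linarith
qed


lemma omega_small:
  fixes \<omega> :: "real \<Rightarrow> real"
  assumes cont: "continuous_on {0..} \<omega>" and zero: "\<omega> 0 = 0" and e: "(e::real) > 0"
  shows "\<exists>\<delta>>0. \<forall>t. 0 \<le> t \<and> t < \<delta> \<longrightarrow> \<omega> t < e"
proof -
  have c: "\<forall>x\<in>{0..}. \<forall>\<epsilon>>0. \<exists>\<delta>>0. \<forall>x'\<in>{0..}. dist x' x < \<delta> \<longrightarrow> dist (\<omega> x') (\<omega> x) < \<epsilon>"
    using cont unfolding continuous_on_iff .
  have "(0::real) \<in> {0..}" by simp
  then obtain \<delta> where d1: "\<delta> > 0" and d2: "\<And>x'. x' \<in> {0..} \<Longrightarrow> dist x' 0 < \<delta> \<Longrightarrow> dist (\<omega> x') (\<omega> 0) < e"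
    using c e by meson
  show ?thesis
  proof (intro exI[of _ \<delta>] conjI allI impI)
    fix t :: real assume t: "0 \<le> t \<and> t < \<delta>"
    then have "t \<in> {0..}" "dist t 0 < \<delta>" by (auto simp: dist_real_def)
    then have "dist (\<omega> t) (\<omega> 0) < e" by (rule d2)
    then show "\<omega> t < e" using zero by (simp add: dist_real_def)
  qed (rule d1)
qed

lemma approx_theta:
  assumes dense: "closure (\<theta> ` {1..}) = UNIV" and "\<delta> > 0"
  shows "\<exists>n. dist x (\<theta> (Suc n)) < \<delta>"
proof -
  have "x \<in> closure (\<theta> ` {1..})" using dense by simp
  from closure_approachableD[OF this assms(2)] obtain m where m: "m \<ge> 1" "dist x (\<theta> m) < \<delta>" by auto
  have "Suc (m - 1) = m" using m(1) by simp
  then show ?thesis using m(2) by (intro exI[of _ "m - 1"]) simp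
qed

lemma transfer_lim:
  assumes C: "\<And>k. fk k \<in> C_omega \<omega>" "f \<in> C_omega \<omega>"
    and cont: "continuous_on {0..} \<omega>" and zero: "\<omega> 0 = 0"
    and dense: "closure (\<theta> ` {1..}) = UNIV"
    and L: "\<And>n. (\<lambda>k. fk k (\<theta> (Suc n))) \<longlonglongrightarrow> f (\<theta> (Suc n))"
  shows "(\<lambda>k. fk k x) \<longlonglongrightarrow> f x"
  unfolding lim_sequentially
proof (intro allI impI)
  fix r :: real assume r: "r > 0"
  obtain \<delta> where d: "\<delta> > 0" "\<And>t. 0 \<le> t \<and> t < \<delta> \<Longrightarrow> \<omega> t < r/3"
    using omega_small[OF cont zero, of "r/3"] r by auto
  obtain n where n: "dist x (\<theta> (Suc n)) < \<delta>" using approx_theta[OF dense d(1)] by blast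
  let ?y = "\<theta> (Suc n)"
  have w: "\<omega> (dist x ?y) < r/3" using d(2) n by auto
  obtain no where no: "\<And>k. k \<ge> no \<Longrightarrow> dist (fk k ?y) (f ?y) < r/3"
  proof -
    have "r/3 > 0" using r by simp
    then show ?thesis using that L[of n] unfolding lim_sequentially by blast
  qed
  show "\<exists>no. \<forall>k\<ge>no. dist (fk k x) (f x) < r"
  proof (intro exI allI impI)
    fix k assume k: "k \<ge> no"
    have "dist (fk k x) (f x) \<le> dist (fk k x) (fk k ?y) + dist (fk k ?y) (f ?y) + dist (f ?y) (f x)"
      using dist_triangle[of "fk k x" "f x" "fk k ?y"] dist_triangle[of "fk k ?y" "f x" "f ?y"] by linarith
    moreover have "dist (fk k x) (fk k ?y) \<le> \<omega> (dist x ?y)" by (rule Comega_dist[OF C(1)])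
    moreover have "dist (f ?y) (f x) \<le> \<omega> (dist x ?y)" using Comega_dist[OF C(2), of ?y x] by (simp add: dist_commute)
    ultimately show "dist (fk k x) (f x) < r" using no[OF k] w by linarith
  qed
qed

lemma transfer_cauchy:
  assumes C: "\<And>k. fk k \<in> C_omega \<omega>"
    and cont: "continuous_on {0..} \<omega>" and zero: "\<omega> 0 = 0"
    and dense: "closure (\<theta> ` {1..}) = UNIV"
    and L: "\<And>n. Cauchy (\<lambda>k. fk k (\<theta> (Suc n)))"
  shows "Cauchy (\<lambda>k. fk k x)"
  unfolding Cauchy_def
proof (intro allI impI)
  fix r :: real assume r: "r > 0"
  obtain \<delta> where d: "\<delta> > 0" "\<And>t. 0 \<le> t \<and> t < \<delta> \<Longrightarrow> \<omega> t < r/3"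
    using omega_small[OF cont zero, of "r/3"] r by auto
  obtain n where n: "dist x (\<theta> (Suc n)) < \<delta>" using approx_theta[OF dense d(1)] by blast
  let ?y = "\<theta> (Suc n)"
  have w: "\<omega> (dist x ?y) < r/3" using d(2) n by auto
  obtain no where no: "\<And>k j. k \<ge> no \<Longrightarrow> j \<ge> no \<Longrightarrow> dist (fk k ?y) (fk j ?y) < r/3"
  proof -
    have "r/3 > 0" using r by simp
    then show ?thesis using that L[of n] unfolding Cauchy_def by blast
  qed
  show "\<exists>M. \<forall>k\<ge>M. \<forall>j\<ge>M. dist (fk k x) (fk j x) < r"
  proof (intro exI allI impI)
    fix k j assume k: "k \<ge> no" and j: "j \<ge> no"
    have "dist (fk k x) (fk j x) \<le> dist (fk k x) (fk k ?y) + dist (fk k ?y) (fk j ?y) + dist (fk j ?y) (fk j x)"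
      using dist_triangle[of "fk k x" "fk j x" "fk k ?y"] dist_triangle[of "fk k ?y" "fk j x" "fk j ?y"] by linarith
    moreover have "dist (fk k x) (fk k ?y) \<le> \<omega> (dist x ?y)" by (rule Comega_dist[OF C(1)])
    moreover have "dist (fk j ?y) (fk j x) \<le> \<omega> (dist x ?y)" using Comega_dist[OF C(1), of j ?y x] by (simp add: dist_commute)
    ultimately show "dist (fk k x) (fk j x) < r" using no[OF k j] w by linarith
  qed
qed

lemma small_d_small_dist:
  assumes "d_Theta \<theta> f g < (1/2)^Suc n * e" "e \<le> 1" 
  shows "dist (f (\<theta> (Suc n))) (g (\<theta> (Suc n))) < e"
proof -
  have "(1/2::real)^Suc n * min 1 (dist (f (\<theta> (Suc n))) (g (\<theta> (Suc n)))) < (1/2)^Suc n * e"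
    using dT_term[of n f \<theta> g] assms(1) by linarith
  then have "min 1 (dist (f (\<theta> (Suc n))) (g (\<theta> (Suc n)))) < e" by simp
  then show ?thesis using assms(2) by linarith
qed

lemma d_to_pointwise:
  assumes "(\<lambda>k. d_Theta \<theta> (fk k) f) \<longlonglongrightarrow> 0"
  shows "(\<lambda>k. fk k (\<theta> (Suc n))) \<longlonglongrightarrow> f (\<theta> (Suc n))"
  unfolding lim_sequentially
proof (intro allI impI)
  fix r :: real assume r: "r > 0"
  let ?e = "min r 1"
  have "(1/2::real)^Suc n * ?e > 0" using r by simp
  then obtain no where no: "\<And>k. k \<ge> no \<Longrightarrow> dist (d_Theta \<theta> (fk k) f) 0 < (1/2)^Suc n * ?e"
    using assms unfolding lim_sequentially by blast
  show "\<exists>no. \<forall>k\<ge>no. dist (fk k (\<theta> (Suc n))) (f (\<theta> (Suc n))) < r"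
  proof (intro exI allI impI)
    fix k assume "k \<ge> no"
    then have "dist (d_Theta \<theta> (fk k) f) 0 < (1/2)^Suc n * ?e" by (rule no)
    moreover have "d_Theta \<theta> (fk k) f \<le> dist (d_Theta \<theta> (fk k) f) 0" by (simp add: dist_real_def)
    ultimately have "d_Theta \<theta> (fk k) f < (1/2)^Suc n * ?e" by linarith
    from small_d_small_dist[OF this] show "dist (fk k (\<theta> (Suc n))) (f (\<theta> (Suc n))) < r" by simp
  qed
qed

lemma d_cauchy_pointwise:
  assumes "\<forall>e>0. \<exists>N. \<forall>k j. N \<le> k \<longrightarrow> N \<le> j \<longrightarrow> d_Theta \<theta> (fk k) (fk j) < e"
  shows "Cauchy (\<lambda>k. fk k (\<theta> (Suc n)))"
  unfolding Cauchy_def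
proof (intro allI impI)
  fix r :: real assume r: "r > 0"
  let ?e = "min r 1"
  have "(1/2::real)^Suc n * ?e > 0" using r by simp
  then obtain N where N: "\<And>k j. N \<le> k \<Longrightarrow> N \<le> j \<Longrightarrow> d_Theta \<theta> (fk k) (fk j) < (1/2)^Suc n * ?e"
    using assms by blast
  show "\<exists>M. \<forall>k\<ge>M. \<forall>j\<ge>M. dist (fk k (\<theta> (Suc n))) (fk j (\<theta> (Suc n))) < r"
  proof (intro exI allI impI)
    fix k j assume "k \<ge> N" "j \<ge> N"
    from small_d_small_dist[OF N[OF this]] show "dist (fk k (\<theta> (Suc n))) (fk j (\<theta> (Suc n))) < r" by simp
  qed
qed

lemma pointwise_to_d:
  assumes L: "\<And>n. (\<lambda>k. fk k (\<theta> (Suc n))) \<longlonglongrightarrow> f (\<theta> (Suc n))"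
  shows "(\<lambda>k. d_Theta \<theta> (fk k) f) \<longlonglongrightarrow> 0"
  unfolding lim_sequentially
proof (intro allI impI)
  fix r :: real assume r: "r > 0"
  obtain N where N: "(1/2::real)^N < r/2" using real_arch_pow_inv[of "r/2" "1/2"] r by auto
  have "(\<lambda>k. \<Sum>n<N. dist (fk k (\<theta> (Suc n))) (f (\<theta> (Suc n)))) \<longlonglongrightarrow> 0"
    by (rule tendsto_null_sum) (use L in \<open>simp add: tendsto_dist_iff[symmetric]\<close>)
  then obtain no where no: "\<And>k. k \<ge> no \<Longrightarrow> dist (\<Sum>n<N. dist (fk k (\<theta> (Suc n))) (f (\<theta> (Suc n)))) 0 < r/2"
  proof -
    have "r/2 > 0" using r by simp
    then show ?thesis using that \<open>(\<lambda>k. \<Sum>n<N. dist (fk k (\<theta> (Suc n))) (f (\<theta> (Suc n)))) \<longlonglongrightarrow> 0\<close> unfolding lim_sequentially by blast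
  qed
  show "\<exists>no. \<forall>k\<ge>no. dist (d_Theta \<theta> (fk k) f) 0 < r"
  proof (intro exI allI impI)
    fix k assume "k \<ge> no"
    then have "dist (\<Sum>n<N. dist (fk k (\<theta> (Suc n))) (f (\<theta> (Suc n)))) 0 < r/2" by (rule no)
    moreover have "(\<Sum>n<N. dist (fk k (\<theta> (Suc n))) (f (\<theta> (Suc n)))) \<le> dist (\<Sum>n<N. dist (fk k (\<theta> (Suc n))) (f (\<theta> (Suc n)))) 0" by (simp add: dist_real_def)
    ultimately have "(\<Sum>n<N. dist (fk k (\<theta> (Suc n))) (f (\<theta> (Suc n)))) < r/2" by linarith
    moreover have "d_Theta \<theta> (fk k) f \<le> (\<Sum>n<N. dist (fk k (\<theta> (Suc n))) (f (\<theta> (Suc n)))) + (1/2)^N"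
      by (rule dT_tail)
    ultimately show "dist (d_Theta \<theta> (fk k) f) 0 < r" using N dT_nonneg[of \<theta> "fk k" f] by (auto simp: dist_real_def)
  qed
qed

lemma Comega_cont:
  assumes "f \<in> C_omega \<omega>" "continuous_on {0..} \<omega>" "\<omega> 0 = 0"
  shows "continuous_on UNIV f"
  unfolding continuous_on_iff
proof (intro ballI allI impI)
  fix x and e :: real assume e: "e > 0"
  obtain \<delta> where d: "\<delta> > 0" "\<And>t. 0 \<le> t \<and> t < \<delta> \<Longrightarrow> \<omega> t < e"
    using omega_small[OF assms(2,3) e] by auto
  show "\<exists>\<delta>>0. \<forall>x'\<in>UNIV. dist x' x < \<delta> \<longrightarrow> dist (f x') (f x) < e"
  proof (intro exI[of _ \<delta>] conjI ballI impI)
    fix x' assume "dist x' x < \<delta>"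
    then have "\<omega> (dist x' x) < e" using d(2) by auto
    then show "dist (f x') (f x) < e" using Comega_dist[OF assms(1), of x' x] by linarith
  qed (rule d(1))
qed

lemma dT_zero:
  assumes "f \<in> C_omega \<omega>" "g \<in> C_omega \<omega>" "continuous_on {0..} \<omega>" "\<omega> 0 = 0"
    and dense: "closure (\<theta> ` {1..}) = UNIV" and d: "d_Theta \<theta> f g = 0"
  shows "f = g"
proof -
  have z: "\<forall>n. (1/2::real) ^ Suc n * min 1 (dist (f (\<theta> (Suc n))) (g (\<theta> (Suc n)))) = 0"
    using d unfolding d_Theta_def by (subst (asm) suminf_eq_zero_iff[OF dT_summ]) auto
  then have eq: "f (\<theta> (Suc n)) = g (\<theta> (Suc n))" for n
  proof -
    have "min 1 (dist (f (\<theta> (Suc n))) (g (\<theta> (Suc n)))) = 0" using z[rule_format, of n] by simp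
    then show ?thesis by (simp add: min_def split: if_splits)
  qed
  have "\<theta> ` {1..} \<subseteq> {x. f x = g x}"
  proof
    fix y assume "y \<in> \<theta> ` {1..}"
    then obtain m where "m \<ge> 1" "y = \<theta> m" by auto
    then have "y = \<theta> (Suc (m - 1))" by simp
    then show "y \<in> {x. f x = g x}" using eq by simp
  qed
  moreover have "closed {x. f x = g x}"
    by (rule closed_Collect_eq[OF Comega_cont[OF assms(1,3,4)] Comega_cont[OF assms(2,3,4)]])
  ultimately have "closure (\<theta> ` {1..}) \<subseteq> {x. f x = g x}" by (rule closure_minimal)
  then show ?thesis using dense by auto
qed


theorem proposition5p1:
  fixes \<omega> :: "real \<Rightarrow> real" and \<theta> :: "nat \<Rightarrow> 'a::complete_space"
  assumes sep: "\<exists>D::'a set. countable D \<and> closure D = UNIV"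
    and nonneg: "\<forall>s\<ge>0. \<omega> s \<ge> 0"
    and cont: "continuous_on {0..} \<omega>"
    and conc: "concave_on {0..} \<omega>"
    and nonzero: "\<exists>s\<ge>0. \<omega> s \<noteq> 0"
    and mono: "mono_on {0..} \<omega>"
    and zero: "\<omega> 0 = 0"
    and dense: "closure (\<theta> ` {1..}) = UNIV"
  shows "Metric_space (C_omega \<omega>) (d_Theta \<theta>)
    \<and> Metric_space.mcomplete (C_omega \<omega>) (d_Theta \<theta>)
    \<and> (\<forall>fk f. (\<forall>k. fk k \<in> C_omega \<omega>) \<longrightarrow> f \<in> C_omega \<omega> \<longrightarrow>
        (limitin (Metric_space.mtopology (C_omega \<omega>) (d_Theta \<theta>)) fk f sequentially
          \<longleftrightarrow> (\<forall>x. (\<lambda>k. fk k x) \<longlonglongrightarrow> f x)))"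
proof -
  have MS: "Metric_space (C_omega \<omega>) (d_Theta \<theta>)"
  proof
    fix x y :: "'a \<Rightarrow> 'a" show "0 \<le> d_Theta \<theta> x y" by (rule dT_nonneg)
    show "d_Theta \<theta> x y = d_Theta \<theta> y x" by (rule dT_commute)
  next
    fix x y :: "'a \<Rightarrow> 'a" assume xy: "x \<in> C_omega \<omega>" "y \<in> C_omega \<omega>"
    show "d_Theta \<theta> x y = 0 \<longleftrightarrow> x = y"
    proof
      assume "d_Theta \<theta> x y = 0"
      then show "x = y" using dT_zero[OF xy cont zero dense] by blast
    next
      assume "x = y" then show "d_Theta \<theta> x y = 0" unfolding d_Theta_def by simp
    qed
  next
    fix x y z :: "'a \<Rightarrow> 'a" show "d_Theta \<theta> x z \<le> d_Theta \<theta> x y + d_Theta \<theta> y z" by (rule dT_triangle)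
  qed
  interpret M: Metric_space "C_omega \<omega>" "d_Theta \<theta>" by (rule MS)
  have LIM: "limitin M.mtopology fk f sequentially \<longleftrightarrow> (\<forall>x. (\<lambda>k. fk k x) \<longlonglongrightarrow> f x)"
    if fk: "\<And>k. fk k \<in> C_omega \<omega>" and f: "f \<in> C_omega \<omega>" for fk :: "nat \<Rightarrow> 'a \<Rightarrow> 'a" and f
  proof -
    have "limitin M.mtopology fk f sequentially \<longleftrightarrow> (\<lambda>k. d_Theta \<theta> (fk k) f) \<longlonglongrightarrow> 0"
      unfolding M.limitin_metric_dist_null using fk f by (simp add: always_eventually)
    also have "\<dots> \<longleftrightarrow> (\<forall>x. (\<lambda>k. fk k x) \<longlonglongrightarrow> f x)"
    proof
      assume "(\<lambda>k. d_Theta \<theta> (fk k) f) \<longlonglongrightarrow> 0"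
      then have "\<And>n. (\<lambda>k. fk k (\<theta> (Suc n))) \<longlonglongrightarrow> f (\<theta> (Suc n))" by (rule d_to_pointwise)
      then show "\<forall>x. (\<lambda>k. fk k x) \<longlonglongrightarrow> f x" using transfer_lim[where fk=fk and f=f, OF fk f cont zero dense] by blast
    next
      assume "\<forall>x. (\<lambda>k. fk k x) \<longlonglongrightarrow> f x"
      then show "(\<lambda>k. d_Theta \<theta> (fk k) f) \<longlonglongrightarrow> 0" by (intro pointwise_to_d) blast
    qed
    finally show ?thesis .
  qed
  have COMPL: "M.mcomplete"
    unfolding M.mcomplete_def
  proof (intro allI impI)
    fix \<sigma> assume "M.MCauchy \<sigma>"
    then have rng: "\<And>k. \<sigma> k \<in> C_omega \<omega>"
      and cau: "\<forall>e>0. \<exists>N. \<forall>k j. N \<le> k \<longrightarrow> N \<le> j \<longrightarrow> d_Theta \<theta> (\<sigma> k) (\<sigma> j) < e"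
      unfolding M.MCauchy_def by auto
    have "\<And>n. Cauchy (\<lambda>k. \<sigma> k (\<theta> (Suc n)))" using cau by (rule d_cauchy_pointwise)
    then have cx: "\<And>x. Cauchy (\<lambda>k. \<sigma> k x)" using transfer_cauchy[where fk=\<sigma>, OF rng cont zero dense] by blast
    define f where "f x = lim (\<lambda>k. \<sigma> k x)" for x
    have conv: "(\<lambda>k. \<sigma> k x) \<longlonglongrightarrow> f x" for x
      unfolding f_def using cx[of x] by (simp add: Cauchy_convergent_iff convergent_LIMSEQ_iff)
    have "f \<in> C_omega \<omega>"
    proof (rule Comega_intro[OF _ mono])
      fix x y
      have "(\<lambda>k. dist (\<sigma> k x) (\<sigma> k y)) \<longlonglongrightarrow> dist (f x) (f y)" by (intro tendsto_dist conv)
      then show "dist (f x) (f y) \<le> \<omega> (dist x y)"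
        by (rule LIMSEQ_le_const2) (use Comega_dist[OF rng] in blast)
    qed
    then have "limitin M.mtopology \<sigma> f sequentially" using LIM[OF rng] conv by simp
    then show "\<exists>x. limitin M.mtopology \<sigma> x sequentially" by blast
  qed
  have "\<forall>fk f. (\<forall>k. fk k \<in> C_omega \<omega>) \<longrightarrow> f \<in> C_omega \<omega> \<longrightarrow>
        (limitin M.mtopology fk f sequentially \<longleftrightarrow> (\<forall>x. (\<lambda>k. fk k x) \<longlonglongrightarrow> f x))"
  proof (intro allI impI)
    fix fk :: "nat \<Rightarrow> 'a \<Rightarrow> 'a" and f :: "'a \<Rightarrow> 'a" assume a: "\<forall>k. fk k \<in> C_omega \<omega>" "f \<in> C_omega \<omega>"
    show "limitin M.mtopology fk f sequentially \<longleftrightarrow> (\<forall>x. (\<lambda>k. fk k x) \<longlonglongrightarrow> f x)"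
      by (rule LIM) (use a in auto)
  qed
  with MS COMPL show ?thesis by (intro conjI)
qed

end
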